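(* Every ABC scoring rule satisfies group participation. That is, if $f$ is the ABC scoring rule induced by a scoring function $s$, then for every approval profile $A$, every committee size $k\in\{1,\dots,m-1\}$ and every group of voters $I\subsetneq N_A$, it is not the case that $f(A_{-I},k)\succsim_i f(A,k)$ for all $i\in I$ while $f(A_{-I},k)\succ_{i^*} f(A,k)$ for some $i^*\in I$.
   Context: Let $C$ be a finite set of $m>1$ candidates. An approval profile $A$ consists of a nonempty finite set of voters $N_A$ and, for each voter $i\in N_A$, a nonempty ballot $A_i\subseteq C$. For $I\subsetneq N_A$, $A_{-I}$ denotes the profile obtained by removing the voters in $I$ (electorate $N_A\setminus I$, ballots unchanged). For $k\in\{1,\dots,m-1\}$ let $\mathcal W_k$ be the set of $k$-element subsets (committees) of $C$. An ABC voting rule $f$ maps each profile $A$ and size $k$ to a nonempty set $f(A,k)\subseteq\mathcal W_k$. Preferences: voter $i$ weakly prefers committee $W$ to $W'$ ($W\succsim_i W'$) if $|W\cap A_i|\ge|W'\cap A_i|$, strictly ($W\succ_i W'$) if $|W\cap A_i|>|W'\cap A_i|$. For sets of committees $X,Y$ (Kelly's extension): $X\succsim_i Y$ iff $W\succsim_i W'$ for all $W\in X$, $W'\in Y$; $X\succ_i Y$ iff $X\succsim_i Y$ and there exist $W\in X$, $W'\in Y$ with $W\succ_i W'$. ABC scoring rules: a scoring function $s$ assigns to all integers $0\le x\le y$ a rational number $s(x,y)$ with $s(0,y)=0$ and $s(x,y)\ge s(x',y)$ whenever $x'\le x\le y$. The score of committee $W$ in $A$ is $\hat s(A,W)=\sum_{i\in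 N_A}s(|A_i\cap W|,|A_i|)$, and the induced rule returns all $W\in\mathcal W_k$ maximizing $\hat s(A,W)$. *)

theory Defs
  imports Complex_Main
begin

definition approval_profile :: "'c set \<Rightarrow> 'v set \<Rightarrow> ('v \<Rightarrow> 'c set) \<Rightarrow> bool" where
  "approval_profile C N A \<longleftrightarrow> finite N \<and> N \<noteq> {} \<and>
     (\<forall>i\<in>N. A i \<noteq> {} \<and> A i \<subseteq> C)"

definition committees :: "'c set \<Rightarrow> nat \<Rightarrow> 'c set set" where
  "committees C k = {W. W \<subseteq> C \<and> card W = k}"

definition scoring_function :: "(nat \<Rightarrow> nat \<Rightarrow> rat) \<Rightarrow> bool" where
  "scoring_function s \<longleftrightarrow> (\<forall>y. s 0 y = 0) \<and>
     (\<forall>x x' y. x' \<le> x \<and> x \<le> y \<longrightarrow> s x y \<ge> s x' y)"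

definition abc_score :: "(nat \<Rightarrow> nat \<Rightarrow> rat) \<Rightarrow> 'v set \<Rightarrow> ('v \<Rightarrow> 'c set) \<Rightarrow> 'c set \<Rightarrow> rat" where
  "abc_score s N A W = (\<Sum>i\<in>N. s (card (A i \<inter> W)) (card (A i)))"

definition scoring_rule :: "(nat \<Rightarrow> nat \<Rightarrow> rat) \<Rightarrow> 'c set \<Rightarrow> 'v set \<Rightarrow> ('v \<Rightarrow> 'c set) \<Rightarrow> nat \<Rightarrow> 'c set set" where
  "scoring_rule s C N A k = {W \<in> committees C k.
      \<forall>W' \<in> committees C k. abc_score s N A W' \<le> abc_score s N A W}"

definition weakly_prefers :: "'c set \<Rightarrow> 'c set \<Rightarrow> 'c set \<Rightarrow> bool" where
  "weakly_prefers Ai W W' \<longleftrightarrow> card (W \<inter> Ai) \<ge> card (W' \<inter> Ai)"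

definition strictly_prefers :: "'c set \<Rightarrow> 'c set \<Rightarrow> 'c set \<Rightarrow> bool" where
  "strictly_prefers Ai W W' \<longleftrightarrow> card (W \<inter> Ai) > card (W' \<inter> Ai)"

definition kelly_weak :: "'c set \<Rightarrow> 'c set set \<Rightarrow> 'c set set \<Rightarrow> bool" where
  "kelly_weak Ai X Y \<longleftrightarrow> (\<forall>W\<in>X. \<forall>W'\<in>Y. weakly_prefers Ai W W')"

definition kelly_strict :: "'c set \<Rightarrow> 'c set set \<Rightarrow> 'c set set \<Rightarrow> bool" where
  "kelly_strict Ai X Y \<longleftrightarrow> kelly_weak Ai X Y \<and> (\<exists>W\<in>X. \<exists>W'\<in>Y. strictly_prefers Ai W W')"

end

theory Submission
  imports Defs
begin

theorem theorem1:
  fixes C :: "'c set" and N :: "'v set" and A :: "'v \<Rightarrow> 'c set"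
    and s :: "nat \<Rightarrow> nat \<Rightarrow> rat" and k :: nat and I :: "'v set"
  assumes "finite C" and "card C > 1"
    and "scoring_function s"
    and "approval_profile C N A"
    and "1 \<le> k" and "k \<le> card C - 1"
    and "I \<subset> N"
  shows "\<not> ((\<forall>i\<in>I. kelly_weak (A i) (scoring_rule s C (N - I) A k) (scoring_rule s C N A k)) \<and>
             (\<exists>i\<in>I. kelly_strict (A i) (scoring_rule s C (N - I) A k) (scoring_rule s C N A k)))"
proof
  assume H: "(\<forall>i\<in>I. kelly_weak (A i) (scoring_rule s C (N - I) A k) (scoring_rule s C N A k)) \<and>
             (\<exists>i\<in>I. kelly_strict (A i) (scoring_rule s C (N - I) A k) (scoring_rule s C N A k))"
  have finN: "finite N" using assms(4) unfolding approval_profile_def by auto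
  have finI: "finite I" using assms(7) finN finite_subset by blast
  have finA: "\<And>i. i \<in> N \<Longrightarrow> finite (A i)"
    using assms(1,4) unfolding approval_profile_def by (meson finite_subset)
  have split: "\<And>W. abc_score s N A W = abc_score s (N - I) A W + abc_score s I A W"
  proof -
    fix W
    have "I \<subseteq> N" using assms(7) by auto
    hence "(\<Sum>i\<in>N. s (card (A i \<inter> W)) (card (A i))) = (\<Sum>i\<in>N - I. s (card (A i \<inter> W)) (card (A i))) + (\<Sum>i\<in>I. s (card (A i \<inter> W)) (card (A i)))"
      using finN by (rule sum.subset_diff)
    thus "abc_score s N A W = abc_score s (N - I) A W + abc_score s I A W"
      unfolding abc_score_def .
  qed
  have mono: "abc_score s I A W' \<le> abc_score s I A W"
    if "\<And>i. i \<in> I \<Longrightarrow> card (W' \<inter> A i) \<le> card (W \<inter> A i)" for W W'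
    unfolding abc_score_def
  proof (rule sum_mono)
    fix i assume i: "i \<in> I"
    hence "i \<in> N" using assms(7) by auto
    hence "card (A i \<inter> W) \<le> card (A i)" using finA by (simp add: card_mono)
    moreover have "card (A i \<inter> W') \<le> card (A i \<inter> W)" using that[OF i] by (simp add: Int_commute)
    ultimately show "s (card (A i \<inter> W')) (card (A i)) \<le> s (card (A i \<inter> W)) (card (A i))"
      using assms(3) unfolding scoring_function_def by blast
  qed
  from H obtain j W0 W0' where j: "j \<in> I" and W0: "W0 \<in> scoring_rule s C (N - I) A k"
    and W0': "W0' \<in> scoring_rule s C N A k" and st: "strictly_prefers (A j) W0 W0'"
    unfolding kelly_strict_def by blast
  have wk: "\<And>i. i \<in> I \<Longrightarrow> card (W0' \<inter> A i) \<le> card (W0 \<inter> A i)"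
    using H W0 W0' unfolding kelly_weak_def weakly_prefers_def by blast
  have c0: "W0 \<in> committees C k" "W0' \<in> committees C k"
    using W0 W0' unfolding scoring_rule_def by auto
  have m1: "abc_score s (N - I) A W0' \<le> abc_score s (N - I) A W0"
    using W0 c0 unfolding scoring_rule_def by auto
  have m2: "abc_score s I A W0' \<le> abc_score s I A W0" using mono wk by blast
  have m3: "abc_score s N A W0 \<le> abc_score s N A W0'"
    using W0' c0 unfolding scoring_rule_def by auto
  have eq: "abc_score s (N - I) A W0' = abc_score s (N - I) A W0"
    using m1 m2 m3 split[of W0] split[of W0'] by linarith
  have "W0' \<in> scoring_rule s C (N - I) A k"
    using W0 c0 eq unfolding scoring_rule_def by auto
  moreover have "W0 \<in> scoring_rule s C N A k"
  proof -
    have "\<forall>W'\<in>committees C k. abc_score s N A W' \<le> abc_score s N A W0'"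
      using W0' unfolding scoring_rule_def by blast
    moreover have "abc_score s N A W0' \<le> abc_score s N A W0"
      using m1 m2 split[of W0] split[of W0'] by linarith
    ultimately show ?thesis using c0 unfolding scoring_rule_def by fastforce
  qed
  ultimately have "weakly_prefers (A j) W0' W0"
    using H j unfolding kelly_weak_def by blast
  thus False using st unfolding weakly_prefers_def strictly_prefers_def by simp
qed

end
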